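(* Let $\ell$ be a label, $A,B$ types and $\rho_{11},\rho_{12},\rho_{21},\rho_{22}$ rows such that all concatenations below are defined. If $\rho_{11}\odot(\ell{:}A;\cdot)\odot\rho_{12} \simeq \rho_{21}\odot(\ell{:}B;\cdot)\odot\rho_{22}$ and $\ell \notin \mathit{dom}(\rho_{11})\cup\mathit{dom}(\rho_{21})$, then $A \simeq B$ and $\rho_{11}\odot\rho_{12} \simeq \rho_{21}\odot\rho_{22}$.
   Context: Types and rows share one grammar: $A,B,C,\rho ::= X \mid \alpha \mid \star \mid \iota \mid A\to B \mid \forall X{:}K.\,A \mid [\rho] \mid \langle\rho\rangle \mid \cdot \mid \ell{:}A;\rho$, where $X$ ranges over type variables (bound by $\forall$), $\alpha$ over type names, $\star$ is the dynamic type (also serving as the dynamic row), $\iota$ over base types, $[\rho]$ and $\langle\rho\rangle$ are record and variant types, $\cdot$ is the empty row, $\ell$ ranges over labels, and $K\in\{\mathsf T,\mathsf R\}$ is a kind. Types are identified up to renaming of bound variables; $\mathit{ftv}(A)$ is the set of free type variables. Row matching $\rho \triangleright_\ell A,\rho'$ is defined by: $(\ell{:}A;\rho)\triangleright_\ell A,\rho$; if $\ell'\neq\ell$ and $\rho\triangleright_\ell A,\rho'$ then $(\ell'{:}B;\rho)\triangleright_\ell A,(\ell'{:}B;\rho')$; and $\star\triangleright_\ell \star,\star$. $\mathbf{QPoly}(A)$ holds iff $A$ is not of the form $\forall X{:}K.\,B$ and $\star$ occurs in $A$. Row concatenation $\rho_1\odot\rho_2$ is defined only when $\rho_1=\ell_1{:}A_1;\dots;\ell_n{:}A_n;\cdot$,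 and then equals $\ell_1{:}A_1;\dots;\ell_n{:}A_n;\rho_2$. $\mathit{dom}(\rho)$ is the set of labels in the top-level label prefix of $\rho$. Consistency $\simeq$ is defined inductively: $A\simeq A$; $\star\simeq A$; $A\simeq\star$; $A_1\to A_2\simeq B_1\to B_2$ if $A_1\simeq B_1$ and $A_2\simeq B_2$; $\forall X{:}K.A\simeq\forall X{:}K.B$ if $A\simeq B$; $\forall X{:}K.A\simeq B$ if $\mathbf{QPoly}(B)$, $X\notin\mathit{ftv}(B)$ and $A\simeq B$; $A\simeq\forall X{:}K.B$ if $\mathbf{QPoly}(A)$, $X\notin\mathit{ftv}(A)$ and $A\simeq B$; $[\rho_1]\simeq[\rho_2]$ and $\langle\rho_1\rangle\simeq\langle\rho_2\rangle$ if $\rho_1\simeq\rho_2$; $\ell{:}A;\rho_1\simeq B$ if $B\triangleright_\ell B',\rho_2$, $A\simeq B'$ and $\rho_1\simeq\rho_2$; $A\simeq \ell{:}B;\rho_2$ if $A\triangleright_\ell A',\rho_1$, $A'\simeq B$ and $\rho_1\simeq\rho_2$. *)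

theory Defs
  imports Main
begin

type_synonym label = string

datatype kind = KT | KR

text \<open>Types and rows share one grammar. Bound type variables X use de Bruijn indices
  (so types are identified up to renaming of bound variables); type names alpha and
  base types iota are represented by natural numbers.\<close>
datatype ty =
    TVar nat
  | TName nat
  | Dyn
  | Base nat
  | Arr ty ty
  | All kind ty
  | Rec ty
  | Var ty
  | REmpty
  | RCons label ty ty

fun shift :: "nat \<Rightarrow> ty \<Rightarrow> ty" where
  "shift c (TVar i) = (if i < c then TVar i else TVar (Suc i))"
| "shift c (TName a) = TName a"
| "shift c Dyn = Dyn"
| "shift c (Base b) = Base b"
| "shift c (Arr A B) = Arr (shift c A) (shift c B)"
| "shift c (All K A) = All K (shift (Suc c) A)"
| "shift c (Rec r) = Rec (shift c r)"
| "shift c (Var r) = Var (shift c r)"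
| "shift c REmpty = REmpty"
| "shift c (RCons l A r) = RCons l (shift c A) (shift c r)"

fun occurs_dyn :: "ty \<Rightarrow> bool" where
  "occurs_dyn (TVar i) = False"
| "occurs_dyn (TName a) = False"
| "occurs_dyn Dyn = True"
| "occurs_dyn (Base b) = False"
| "occurs_dyn (Arr A B) = (occurs_dyn A \<or> occurs_dyn B)"
| "occurs_dyn (All K A) = occurs_dyn A"
| "occurs_dyn (Rec r) = occurs_dyn r"
| "occurs_dyn (Var r) = occurs_dyn r"
| "occurs_dyn REmpty = False"
| "occurs_dyn (RCons l A r) = (occurs_dyn A \<or> occurs_dyn r)"

definition QPoly :: "ty \<Rightarrow> bool" where
  "QPoly A \<longleftrightarrow> (\<nexists>K B. A = All K B) \<and> occurs_dyn A"

inductive rmatch :: "ty \<Rightarrow> label \<Rightarrow> ty \<Rightarrow> ty \<Rightarrow> bool" where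
  rm_head: "rmatch (RCons l A r) l A r"
| rm_tail: "l' \<noteq> l \<Longrightarrow> rmatch r l A r' \<Longrightarrow> rmatch (RCons l' B r) l A (RCons l' B r')"
| rm_dyn: "rmatch Dyn l Dyn Dyn"

text \<open>Consistency. The side condition X not free in B for a binder is expressed in
  de Bruijn form: the unbound side is shifted past the new binder.\<close>
inductive consistent :: "ty \<Rightarrow> ty \<Rightarrow> bool" (infix "\<simeq>" 50) where
  c_refl: "A \<simeq> A"
| c_dynL: "Dyn \<simeq> A"
| c_dynR: "A \<simeq> Dyn"
| c_arr: "A1 \<simeq> B1 \<Longrightarrow> A2 \<simeq> B2 \<Longrightarrow> Arr A1 A2 \<simeq> Arr B1 B2"
| c_all: "A \<simeq> B \<Longrightarrow> All K A \<simeq> All K B"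
| c_allL: "QPoly B \<Longrightarrow> A \<simeq> shift 0 B \<Longrightarrow> All K A \<simeq> B"
| c_allR: "QPoly A \<Longrightarrow> shift 0 A \<simeq> B \<Longrightarrow> A \<simeq> All K B"
| c_rec: "r1 \<simeq> r2 \<Longrightarrow> Rec r1 \<simeq> Rec r2"
| c_var: "r1 \<simeq> r2 \<Longrightarrow> Var r1 \<simeq> Var r2"
| c_rconsL: "rmatch B l B' r2 \<Longrightarrow> A \<simeq> B' \<Longrightarrow> r1 \<simeq> r2 \<Longrightarrow> RCons l A r1 \<simeq> B"
| c_rconsR: "rmatch A l A' r1 \<Longrightarrow> A' \<simeq> B \<Longrightarrow> r1 \<simeq> r2 \<Longrightarrow> A \<simeq> RCons l B r2"

fun closed_row :: "ty \<Rightarrow> bool" where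
  "closed_row REmpty = True"
| "closed_row (RCons l A r) = closed_row r"
| "closed_row _ = False"

text \<open>Row concatenation rho1 (.) rho2; only meaningful when closed_row rho1.\<close>
fun rconcat :: "ty \<Rightarrow> ty \<Rightarrow> ty" (infixr "\<odot>" 65) where
  "rconcat REmpty r2 = r2"
| "rconcat (RCons l A r) r2 = RCons l A (rconcat r r2)"
| "rconcat r r2 = undefined"

fun rdom :: "ty \<Rightarrow> label set" where
  "rdom (RCons l A r) = insert l (rdom r)"
| "rdom _ = {}"

end

theory Submission
  imports Defs
begin

lemma rmatch_det:
  "rmatch X l A X' \<Longrightarrow> rmatch X l B Y' \<Longrightarrow> A = B \<and> X' = Y'"
proof (induction arbitrary: B Y' rule: rmatch.induct)
  case (rm_head l A r)
  then show ?case by (auto elim: rmatch.cases)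
next
  case (rm_tail l' l r A r' B')
  from rm_tail.prems rm_tail.hyps show ?case
    by (cases rule: rmatch.cases) (auto dest: rm_tail.IH)
next
  case (rm_dyn l)
  then show ?case by (auto elim: rmatch.cases)
qed

lemma rmatch_swap:
  "rmatch Y l0 B' r2 \<Longrightarrow> rmatch Y l B Y' \<Longrightarrow> l \<noteq> l0 \<Longrightarrow>
   \<exists>r. rmatch r2 l B r \<and> rmatch Y' l0 B' r"
proof (induction arbitrary: Y' rule: rmatch.induct)
  case (rm_head l0' C r)
  from rm_head.prems show ?case
    by (cases rule: rmatch.cases) (auto intro: rmatch.intros)
next
  case (rm_tail k l0' r C r2' D)
  from rm_tail.prems(1) show ?case
  proof (cases rule: rmatch.cases)
    case rm_head
    then show ?thesis using rm_tail.hyps by (auto intro: rmatch.intros)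
  next
    case (rm_tail Y'')
    from rm_tail.IH[OF rm_tail(3) \<open>l \<noteq> l0'\<close>] obtain s where
      "rmatch r2' l B s" "rmatch Y'' l0' C s" by blast
    have "rmatch (RCons k D r2') l B (RCons k D s)"
      using rm_tail(2) \<open>rmatch r2' l B s\<close> by (rule rmatch.rm_tail)
    moreover have "rmatch (RCons k D Y'') l0' C (RCons k D s)"
      using rm_tail.hyps(1) \<open>rmatch Y'' l0' C s\<close> by (rule rmatch.rm_tail)
    ultimately show ?thesis using rm_tail(1) by blast
  qed
next
  case (rm_dyn l0')
  then show ?case by (auto elim: rmatch.cases intro: rmatch.intros)
qed

lemma key:
  "X \<simeq> Y \<Longrightarrow> rmatch X l A X' \<Longrightarrow> rmatch Y l B Y' \<Longrightarrow> A \<simeq> B \<and> X' \<simeq> Y'"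
proof (induction arbitrary: A B X' Y' rule: consistent.induct)
  case (c_refl X)
  then show ?case using rmatch_det consistent.c_refl by blast
next
  case (c_dynL Y)
  then show ?case by (auto elim: rmatch.cases intro: consistent.intros)
next
  case (c_dynR X)
  then show ?case by (auto elim: rmatch.cases intro: consistent.intros)
next
  case (c_arr A1 B1 A2 B2)
  then show ?case by (auto elim: rmatch.cases)
next
  case (c_all A' B' K)
  then show ?case by (auto elim: rmatch.cases)
next
  case (c_allL B0 A0 K)
  then show ?case by (auto elim: rmatch.cases)
next
  case (c_allR A0 B0 K)
  then show ?case by (auto elim: rmatch.cases)
next
  case (c_rec r1 r2)
  then show ?case by (auto elim: rmatch.cases)
next
  case (c_var r1 r2)
  then show ?case by (auto elim: rmatch.cases)
next
  case (c_rconsL Y l0 B0 r2 A0 r1)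
  show ?case
  proof (cases "l0 = l")
    case True
    with c_rconsL.prems(1) have "A = A0" "X' = r1" by (auto elim: rmatch.cases)
    moreover have "rmatch Y l B0 r2" using True c_rconsL.hyps(1) by simp
    from rmatch_det[OF this c_rconsL.prems(2)] have "B = B0" "Y' = r2" by auto
    ultimately show ?thesis using c_rconsL by auto
  next
    case False
    from c_rconsL.prems(1) False obtain r1' where
      X': "X' = RCons l0 A0 r1'" and m1: "rmatch r1 l A r1'" by (auto elim: rmatch.cases)
    from rmatch_swap[OF c_rconsL.hyps(1) c_rconsL.prems(2)] False obtain s where
      "rmatch r2 l B s" "rmatch Y' l0 B0 s" by auto
    with c_rconsL.IH(2)[OF m1] have "A \<simeq> B" "r1' \<simeq> s" by auto
    then show ?thesis using X' \<open>rmatch Y' l0 B0 s\<close> c_rconsL.hyps(2)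
      by (auto intro: consistent.c_rconsL)
  qed
next
  case (c_rconsR X l0 A0 r1 B0 r2)
  show ?case
  proof (cases "l0 = l")
    case True
    with c_rconsR.prems(2) have "B = B0" "Y' = r2" by (auto elim: rmatch.cases)
    moreover have "rmatch X l A0 r1" using True c_rconsR.hyps(1) by simp
    from rmatch_det[OF this c_rconsR.prems(1)] have "A = A0" "X' = r1" by auto
    ultimately show ?thesis using c_rconsR by auto
  next
    case False
    from c_rconsR.prems(2) False obtain r2' where
      Y': "Y' = RCons l0 B0 r2'" and m2: "rmatch r2 l B r2'" by (auto elim: rmatch.cases)
    from rmatch_swap[OF c_rconsR.hyps(1) c_rconsR.prems(1)] False obtain s where
      "rmatch r1 l A s" "rmatch X' l0 A0 s" by auto
    with c_rconsR.IH(2) m2 have "A \<simeq> B" "s \<simeq> r2'" by auto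
    then show ?thesis using Y' \<open>rmatch X' l0 A0 s\<close> c_rconsR.hyps(2)
      by (auto intro: consistent.c_rconsR)
  qed
qed

lemma rmatch_concat:
  "closed_row r11 \<Longrightarrow> l \<notin> rdom r11 \<Longrightarrow>
   rmatch (r11 \<odot> RCons l A REmpty \<odot> r12) l A (r11 \<odot> r12)"
  by (induction r11) (auto intro: rmatch.intros)

theorem mainTheorem9:
  fixes l :: label and A B r11 r12 r21 r22 :: ty
  assumes "closed_row r11" and "closed_row r21"
    and "r11 \<odot> RCons l A REmpty \<odot> r12 \<simeq> r21 \<odot> RCons l B REmpty \<odot> r22"
    and "l \<notin> rdom r11 \<union> rdom r21"
  shows "A \<simeq> B \<and> r11 \<odot> r12 \<simeq> r21 \<odot> r22"
  using key[OF assms(3) rmatch_concat[OF assms(1)] rmatch_concat[OF assms(2)]] assms(4)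
  by auto

end
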